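(* Let $n\ge0$ and $k\ge1$ be integers and let $T$ be a bounded linear operator on the Hardy space $H^2(\mathbb{D})$ such that for some scalars $a_{ij}$ ($0\le i\le n+k$, $0\le j\le n$), $Tz^j=\sum_{i=0}^{n+k}a_{ij}z^i$ for $0\le j\le n$ and $Tz^j=z^{j+k}$ for $j\ge n+1$. Suppose the matrix $A_1=(a_{ij})_{0\le i,j\le n}$ is a contraction on $\mathbb{C}^{n+1}$. Then $T$ is analytic if and only if $T$ has no non-zero eigenvalue.
   Context: An operator $T$ on a Hilbert space $\mathcal{H}$ is analytic if $\bigcap_{m\ge1}T^m\mathcal{H}=\{0\}$. $H^2(\mathbb{D})$ is the Hardy space on the unit disc, with orthonormal basis $\{z^m\}_{m\ge0}$. *)

theory Defs
  imports "HOL-Analysis.Analysis"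
begin

text \<open>Model of the Hardy space H^2(D): an element f of H^2 is identified with its
  sequence of Taylor coefficients (f = sum f_m z^m), so H^2 is the space of
  square-summable complex sequences, and z^m corresponds to the m-th unit vector.\<close>

definition hardy2 :: "(nat \<Rightarrow> complex) set" where
  "hardy2 = {f. summable (\<lambda>m. (cmod (f m))\<^sup>2)}"

definition h2_norm :: "(nat \<Rightarrow> complex) \<Rightarrow> real" where
  "h2_norm f = sqrt (\<Sum>m. (cmod (f m))\<^sup>2)"

definition zpow :: "nat \<Rightarrow> (nat \<Rightarrow> complex)" where
  "zpow j = (\<lambda>m. if m = j then 1 else 0)"

definition bounded_op_h2 :: "((nat \<Rightarrow> complex) \<Rightarrow> (nat \<Rightarrow> complex)) \<Rightarrow> bool" where
  "bounded_op_h2 T \<longleftrightarrow>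
     (\<forall>f\<in>hardy2. T f \<in> hardy2) \<and>
     (\<forall>f\<in>hardy2. \<forall>g\<in>hardy2. T (\<lambda>m. f m + g m) = (\<lambda>m. T f m + T g m)) \<and>
     (\<forall>c. \<forall>f\<in>hardy2. T (\<lambda>m. c * f m) = (\<lambda>m. c * T f m)) \<and>
     (\<exists>C. \<forall>f\<in>hardy2. h2_norm (T f) \<le> C * h2_norm f)"

definition analytic_op_h2 :: "((nat \<Rightarrow> complex) \<Rightarrow> (nat \<Rightarrow> complex)) \<Rightarrow> bool" where
  "analytic_op_h2 T \<longleftrightarrow> (\<Inter>m\<in>{1..}. (T ^^ m) ` hardy2) = {(\<lambda>_. 0)}"

definition eigenvalue_h2 :: "((nat \<Rightarrow> complex) \<Rightarrow> (nat \<Rightarrow> complex)) \<Rightarrow> complex \<Rightarrow> bool" where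
  "eigenvalue_h2 T lam \<longleftrightarrow> (\<exists>f\<in>hardy2. f \<noteq> (\<lambda>_. 0) \<and> T f = (\<lambda>m. lam * f m))"

definition contraction_matrix :: "nat \<Rightarrow> (nat \<Rightarrow> nat \<Rightarrow> complex) \<Rightarrow> bool" where
  "contraction_matrix n a \<longleftrightarrow>
     (\<forall>x :: nat \<Rightarrow> complex.
        (\<Sum>i\<le>n. (cmod (\<Sum>j\<le>n. a i j * x j))\<^sup>2) \<le> (\<Sum>j\<le>n. (cmod (x j))\<^sup>2))"

end

theory Submission
  imports Defs "HOL-Library.Function_Algebras"
    "HOL-Computational_Algebra.Fundamental_Theorem_Algebra"
begin


lemma sum_fun_apply: "(sum f A) x = (\<Sum>a\<in>A. f a x)"
  by (induction A rule: infinite_finite_induct) auto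

lemma hardy2_zero: "(\<lambda>_. 0) \<in> hardy2"
  by (simp add: hardy2_def)

lemma hardy2_add: assumes "f \<in> hardy2" "g \<in> hardy2" shows "(\<lambda>m. f m + g m) \<in> hardy2"
proof -
  have "summable (\<lambda>m. 2 * (cmod (f m))\<^sup>2 + 2 * (cmod (g m))\<^sup>2)"
    using assms by (auto simp: hardy2_def intro!: summable_add summable_mult)
  moreover have "norm ((cmod (f m + g m))\<^sup>2) \<le> 2 * (cmod (f m))\<^sup>2 + 2 * (cmod (g m))\<^sup>2" for m
  proof -
    have "cmod (f m + g m) \<le> cmod (f m) + cmod (g m)" by (rule norm_triangle_ineq)
    hence "(cmod (f m + g m))\<^sup>2 \<le> (cmod (f m) + cmod (g m))\<^sup>2"
      by (simp add: power_mono)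
    also have "\<dots> \<le> 2 * (cmod (f m))\<^sup>2 + 2 * (cmod (g m))\<^sup>2"
      using zero_le_power2[of "cmod (f m) - cmod (g m)"]
      by (simp add: power2_eq_square algebra_simps)
    finally show ?thesis by simp
  qed
  ultimately show ?thesis unfolding hardy2_def mem_Collect_eq
    by (intro summable_comparison_test'[where f= "\<lambda>m. (cmod (f m + g m))\<^sup>2" and g="\<lambda>m. 2 * (cmod (f m))\<^sup>2 + 2 * (cmod (g m))\<^sup>2"]) auto
qed

lemma hardy2_scale: assumes "f \<in> hardy2" shows "(\<lambda>m. c * f m) \<in> hardy2"
  using assms by (auto simp: hardy2_def norm_mult power_mult_distrib intro!: summable_mult)

lemma hardy2_sum: "finite A \<Longrightarrow> (\<forall>j\<in>A. g j \<in> hardy2) \<Longrightarrow> (\<lambda>i. \<Sum>j\<in>A. c j * g j i) \<in> hardy2"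
proof (induction A rule: finite_induct)
  case empty thus ?case by (simp add: hardy2_zero)
next
  case (insert x F)
  thus ?case using hardy2_add[OF hardy2_scale[of "g x" "c x"], of "(\<lambda>i. \<Sum>j\<in>F. c j * g j i)"]
    by simp
qed

lemma zpow_hardy2: "zpow j \<in> hardy2"
proof -
  have "summable (\<lambda>m. (cmod (zpow j m))\<^sup>2)"
    by (rule summable_finite[of "{j}"]) (auto simp: zpow_def)
  thus ?thesis by (simp add: hardy2_def)
qed

lemma coord_le_norm: assumes "g \<in> hardy2" shows "cmod (g i) \<le> h2_norm g"
proof -
  have "(cmod (g i))\<^sup>2 \<le> (\<Sum>m. (cmod (g m))\<^sup>2)"
    using sum_le_suminf[of "\<lambda>m. (cmod (g m))\<^sup>2" "{i}"] assms
    by (auto simp: hardy2_def)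
  thus ?thesis unfolding h2_norm_def by (simp add: real_le_rsqrt)
qed



lemma dep:
  fixes v :: "nat \<Rightarrow> nat \<Rightarrow> complex"
  assumes supp: "\<And>j i. n < i \<Longrightarrow> v j i = 0"
  shows "\<exists>\<alpha>. (\<exists>j\<le>Suc n. \<alpha> j \<noteq> 0) \<and> (\<forall>i. (\<Sum>j\<le>Suc n. \<alpha> j * v j i) = 0)"
proof -
  interpret fv: vector_space "\<lambda>(c::complex) (f::nat\<Rightarrow>complex). (\<lambda>i. c * f i)"
    by unfold_locales (auto simp: fun_eq_iff algebra_simps)
  show ?thesis
  proof (cases "inj_on v {..Suc n}")
    case False
    then obtain j1 j2 where j12: "j1 \<le> Suc n" "j2 \<le> Suc n" "j1 \<noteq> j2" "v j1 = v j2"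
      by (auto simp: inj_on_def)
    define \<alpha> where "\<alpha> = (\<lambda>j. if j = j1 then (1::complex) else if j = j2 then -1 else 0)"
    have "(\<Sum>j\<le>Suc n. \<alpha> j * v j i) = 0" for i
    proof -
      have "(\<Sum>j\<le>Suc n. \<alpha> j * v j i) = (\<Sum>j\<in>{j1,j2}. \<alpha> j * v j i)"
        by (rule sum.mono_neutral_right) (use j12 in \<open>auto simp: \<alpha>_def\<close>)
      also have "\<dots> = 0" using j12 by (simp add: \<alpha>_def)
      finally show ?thesis .
    qed
    moreover have "\<alpha> j1 \<noteq> 0" by (simp add: \<alpha>_def)
    ultimately show ?thesis using j12 by blast
  next
    case True
    let ?S = "v ` {..Suc n}"
    have cardS: "card ?S = Suc (Suc n)" using card_image[OF True] by simp
    have sub: "?S \<subseteq> fv.span (zpow ` {..n})"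
    proof
      fix x assume "x \<in> ?S" then obtain j where x: "x = v j" by auto
      have xs: "x = (\<Sum>i\<le>n. (\<lambda>m. v j i * zpow i m))"
      proof
        fix m
        show "x m = (\<Sum>i\<le>n. (\<lambda>m. v j i * zpow i m)) m"
        proof (cases "m \<le> n")
          case True
          have "(\<Sum>i\<le>n. v j i * zpow i m) = (\<Sum>i\<in>{m}. v j i * zpow i m)"
            by (rule sum.mono_neutral_right) (use True in \<open>auto simp: zpow_def\<close>)
          thus ?thesis by (simp add: sum_fun_apply x zpow_def)
        next
          case False
          thus ?thesis using supp[of m j] by (auto simp: sum_fun_apply x zpow_def)
        qed
      qed
      have "(\<Sum>i\<le>n. (\<lambda>m. v j i * zpow i m)) \<in> fv.span (zpow ` {..n})"
        by (intro fv.span_sum fv.span_scale fv.span_base) auto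
      with xs show "x \<in> fv.span (zpow ` {..n})" by simp
    qed
    have "fv.dependent ?S"
    proof (rule ccontr)
      assume "\<not> fv.dependent ?S"
      from fv.independent_span_bound[OF _ this sub] have "card ?S \<le> card (zpow ` {..n})" by simp
      also have "\<dots> \<le> Suc n" using card_image_le[of "{..n}" zpow] by simp
      finally show False using cardS by simp
    qed
    then obtain u where u: "\<exists>x\<in>?S. u x \<noteq> 0" "(\<Sum>x\<in>?S. (\<lambda>i. u x * x i)) = 0"
      using fv.dependent_finite[of ?S] by auto
    define \<alpha> where "\<alpha> = (\<lambda>j. u (v j))"
    have "(\<Sum>j\<le>Suc n. \<alpha> j * v j i) = 0" for i
    proof -
      have "(\<Sum>j\<le>Suc n. \<alpha> j * v j i) = (\<Sum>x\<in>?S. u x * x i)"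
        using sum.reindex[OF True, of "\<lambda>x. u x * x i"] by (simp add: \<alpha>_def)
      also have "\<dots> = (\<Sum>x\<in>?S. (\<lambda>i. u x * x i)) i" by (simp add: sum_fun_apply)
      also have "\<dots> = 0" using u(2) by simp
      finally show ?thesis .
    qed
    moreover from u(1) obtain j where "j \<le> Suc n" "\<alpha> j \<noteq> 0" by (auto simp: \<alpha>_def)
    ultimately show ?thesis by blast
  qed
qed



locale hsetup =
  fixes n k :: nat and a :: "nat \<Rightarrow> nat \<Rightarrow> complex"
  assumes k1: "k \<ge> 1"
begin

definition Rop :: "(nat \<Rightarrow> complex) \<Rightarrow> (nat \<Rightarrow> complex)" where
  "Rop f = (\<lambda>i. if i \<le> n + k then (\<Sum>j\<le>n. a i j * f j) else f (i - k))"
definition Pr :: "(nat \<Rightarrow> complex) \<Rightarrow> (nat \<Rightarrow> complex)" where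
  "Pr f = (\<lambda>i. if i \<le> n then f i else 0)"
definition PA :: "(nat \<Rightarrow> complex) \<Rightarrow> (nat \<Rightarrow> complex)" where
  "PA f = (\<lambda>i. if i \<le> n then (\<Sum>j\<le>n. a i j * f j) else 0)"

lemma swap_aux: "(\<Sum>l\<le>n. a i l * (\<Sum>j\<in>A. c j * g j l)) = (\<Sum>j\<in>A. c j * (\<Sum>l\<le>n. a i l * g j l))"
proof -
  have "(\<Sum>l\<le>n. a i l * (\<Sum>j\<in>A. c j * g j l)) = (\<Sum>l\<le>n. \<Sum>j\<in>A. c j * (a i l * g j l))"
    by (simp add: sum_distrib_left mult_ac)
  also have "\<dots> = (\<Sum>j\<in>A. \<Sum>l\<le>n. c j * (a i l * g j l))" by (rule sum.swap)
  also have "\<dots> = (\<Sum>j\<in>A. c j * (\<Sum>l\<le>n. a i l * g j l))" by (simp add: sum_distrib_left)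
  finally show ?thesis .
qed

lemma Rop_lin: "Rop (\<lambda>i. \<Sum>j\<in>A. c j * g j i) = (\<lambda>i. \<Sum>j\<in>A. c j * Rop (g j) i)"
  unfolding Rop_def by (auto simp: fun_eq_iff swap_aux)

lemma PA_lin: "PA (\<lambda>i. \<Sum>j\<in>A. c j * g j i) = (\<lambda>i. \<Sum>j\<in>A. c j * PA (g j) i)"
  unfolding PA_def by (auto simp: fun_eq_iff swap_aux)

lemma Rpow_lin: "(Rop^^m) (\<lambda>i. \<Sum>j\<in>A. c j * g j i) = (\<lambda>i. \<Sum>j\<in>A. c j * (Rop^^m) (g j) i)"
  by (induction m) (simp_all add: Rop_lin)

lemma PApow_lin: "(PA^^m) (\<lambda>i. \<Sum>j\<in>A. c j * g j i) = (\<lambda>i. \<Sum>j\<in>A. c j * (PA^^m) (g j) i)"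
  by (induction m) (simp_all add: PA_lin)

lemma PApow_zero: "(PA^^m) (\<lambda>_. 0) = (\<lambda>_. 0)"
  by (induction m) (auto simp: PA_def)

lemma Pr_Rop: "Pr (Rop f) = PA f"
  unfolding Pr_def Rop_def PA_def by auto

lemma PA_Pr: "PA (Pr f) = PA f"
  unfolding Pr_def PA_def by auto

lemma Pr_Rpow: "Pr ((Rop^^m) f) = (PA^^m) (Pr f)"
proof (induction m)
  case 0 thus ?case by simp
next
  case (Suc m)
  have "Pr ((Rop^^Suc m) f) = PA ((Rop^^m) f)" by (simp add: Pr_Rop)
  also have "\<dots> = PA (Pr ((Rop^^m) f))" by (simp add: PA_Pr)
  finally show ?case using Suc by simp
qed

lemma PApow_supp: "(\<forall>i>n. u i = 0) \<Longrightarrow> n < i \<Longrightarrow> (PA^^j) u i = 0"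
  by (cases j) (auto simp: PA_def)

lemma PApow_high: assumes "(PA^^N) u = (\<lambda>_. 0)" "N \<le> M" shows "(PA^^M) u = (\<lambda>_. 0)"
proof -
  have "(PA^^M) u = (PA^^(M - N)) ((PA^^N) u)"
    using assms(2) funpow_add[of "M - N" N PA] by simp
  thus ?thesis using assms(1) PApow_zero by simp
qed

lemma D1_step:
  assumes z: "(PA^^N) u = (\<lambda>_. 0)" and N: "Suc n < N" and supp: "\<forall>i>n. u i = 0"
  shows "(PA^^(N - 1)) u = (\<lambda>_. 0)"
proof -
  obtain \<alpha> where \<alpha>: "\<exists>j\<le>Suc n. \<alpha> j \<noteq> 0" "\<forall>i. (\<Sum>j\<le>Suc n. \<alpha> j * (PA^^j) u i) = 0"
    using dep[of n "\<lambda>j. (PA^^j) u"] PApow_supp[OF supp] by blast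
  define j0 where "j0 = (LEAST j. \<alpha> j \<noteq> 0)"
  have j0: "\<alpha> j0 \<noteq> 0" unfolding j0_def by (metis (mono_tags) LeastI \<alpha>(1))
  have j0le: "j0 \<le> Suc n" using \<alpha>(1) unfolding j0_def by (meson Least_le order_trans)
  have j0min: "\<And>j. j < j0 \<Longrightarrow> \<alpha> j = 0" unfolding j0_def using not_less_Least by blast
  define d where "d = N - 1 - j0"
  have "(PA^^d) (\<lambda>i. \<Sum>j\<le>Suc n. \<alpha> j * (PA^^j) u i) = (\<lambda>_. 0)"
    using \<alpha>(2) PApow_zero by simp
  hence eq: "(\<Sum>j\<le>Suc n. \<alpha> j * (PA^^(d + j)) u i) = 0" for i
    unfolding PApow_lin by (simp add: funpow_add fun_eq_iff)
  have "(\<Sum>j\<le>Suc n. \<alpha> j * (PA^^(d + j)) u i) = (\<Sum>j\<in>{j0}. \<alpha> j * (PA^^(d + j)) u i)" for i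
  proof (rule sum.mono_neutral_right)
    show "\<forall>j\<in>{..Suc n} - {j0}. \<alpha> j * (PA^^(d + j)) u i = 0"
    proof
      fix j assume j: "j \<in> {..Suc n} - {j0}"
      show "\<alpha> j * (PA^^(d + j)) u i = 0"
      proof (cases "j < j0")
        case True thus ?thesis using j0min by simp
      next
        case False
        hence "N \<le> d + j" using j N j0le unfolding d_def by auto
        thus ?thesis using PApow_high[OF z] by (simp add: fun_eq_iff)
      qed
    qed
  qed (use j0le in auto)
  hence "\<alpha> j0 * (PA^^(N - 1)) u i = 0" for i
    using eq[of i] N j0le unfolding d_def by simp
  thus ?thesis using j0 by (simp add: fun_eq_iff)
qed

lemma D1_supp:
  assumes supp: "\<forall>i>n. u i = 0"
  shows "(PA^^N) u = (\<lambda>_. 0) \<Longrightarrow> (PA^^(Suc n)) u = (\<lambda>_. 0)"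
proof (induction N)
  case 0 thus ?case using PApow_zero[of "Suc n"] by (simp del: funpow.simps)
next
  case (Suc N)
  show ?case
  proof (cases "Suc N \<le> Suc n")
    case True thus ?thesis using PApow_high[OF Suc.prems, of "Suc n"] by (simp del: funpow.simps)
  next
    case False
    thus ?thesis using D1_step[OF Suc.prems _ supp] Suc.IH by simp
  qed
qed

lemma PApow_Pr: "(PA^^Suc m) (Pr v) = (PA^^Suc m) v"
  by (simp only: funpow_Suc_right o_apply PA_Pr)

lemma D1:
  assumes "(PA^^N) v = (\<lambda>_. 0)"
  shows "(PA^^(Suc n)) v = (\<lambda>_. 0)"
proof (cases N)
  case 0 thus ?thesis using assms PApow_zero[of "Suc n"] by (simp del: funpow.simps)
next
  case (Suc M)
  have "(PA^^N) (Pr v) = (\<lambda>_. 0)" using assms Suc PApow_Pr by simp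
  from D1_supp[OF _ this] have "(PA^^(Suc n)) (Pr v) = (\<lambda>_. 0)" by (simp add: Pr_def)
  thus ?thesis using PApow_Pr by simp
qed

lemma vanish: "\<forall>m y. n + 2 + i \<le> m \<longrightarrow> (PA^^m) (Pr y) = (\<lambda>_. 0) \<longrightarrow> (Rop^^m) y i = 0"
proof (induction i rule: less_induct)
  case (less i)
  show ?case
  proof (intro allI impI)
    fix m y assume m: "n + 2 + i \<le> m" and z: "(PA^^m) (Pr y) = (\<lambda>_. 0)"
    obtain m' where m': "m = Suc m'" using m by (cases m) auto
    have d1: "(PA^^(Suc n)) (Pr y) = (\<lambda>_. 0)" using D1[OF z] .
    have z': "(PA^^m') (Pr y) = (\<lambda>_. 0)" using PApow_high[OF d1, of m'] m m' by simp
    define zz where "zz = (Rop^^m') y"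
    have "Pr zz = (\<lambda>_. 0)" using z' Pr_Rpow zz_def by simp
    hence zz0: "zz j = 0" if "j \<le> n" for j using that by (simp add: Pr_def fun_eq_iff) (metis)
    have R: "(Rop^^m) y = Rop zz" using m' zz_def by simp
    show "(Rop^^m) y i = 0"
    proof (cases "i \<le> n + k")
      case True thus ?thesis using R zz0 by (simp add: Rop_def)
    next
      case False
      hence "Rop zz i = zz (i - k)" by (simp add: Rop_def)
      moreover have "i - k < i" using False k1 by simp
      moreover have "n + 2 + (i - k) \<le> m'" using m m' k1 False by simp
      ultimately show ?thesis using less.IH[of "i - k"] z' R zz_def by simp
    qed
  qed
qed

end



context hsetup
begin

lemma T_facts:
  assumes bT: "bounded_op_h2 T"
  shows T_in: "\<And>f. f \<in> hardy2 \<Longrightarrow> T f \<in> hardy2"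
    and T_add: "\<And>f g. f \<in> hardy2 \<Longrightarrow> g \<in> hardy2 \<Longrightarrow> T (\<lambda>m. f m + g m) = (\<lambda>m. T f m + T g m)"
    and T_scale: "\<And>c f. f \<in> hardy2 \<Longrightarrow> T (\<lambda>m. c * f m) = (\<lambda>m. c * T f m)"
    and T_bnd: "\<exists>C. \<forall>f\<in>hardy2. h2_norm (T f) \<le> C * h2_norm f"
  using bT unfolding bounded_op_h2_def by blast+

lemma T_zero: assumes bT: "bounded_op_h2 T" shows "T (\<lambda>_. 0) = (\<lambda>_. 0)"
  using T_scale[OF bT, of "\<lambda>_. 0" 0] hardy2_zero by simp

lemma T_sum:
  assumes bT: "bounded_op_h2 T"
  shows "finite A \<Longrightarrow> (\<forall>j\<in>A. g j \<in> hardy2) \<Longrightarrow> T (\<lambda>i. \<Sum>j\<in>A. c j * g j i) = (\<lambda>i. \<Sum>j\<in>A. c j * T (g j) i)"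
proof (induction A rule: finite_induct)
  case empty thus ?case using T_zero[OF bT] by simp
next
  case (insert x F)
  have "T (\<lambda>i. \<Sum>j\<in>insert x F. c j * g j i) = T (\<lambda>i. c x * g x i + (\<Sum>j\<in>F. c j * g j i))"
    using insert by simp
  also have "\<dots> = (\<lambda>i. T (\<lambda>i. c x * g x i) i + T (\<lambda>i. \<Sum>j\<in>F. c j * g j i) i)"
    by (rule T_add[OF bT]) (use insert hardy2_scale hardy2_sum in auto)
  also have "\<dots> = (\<lambda>i. \<Sum>j\<in>insert x F. c j * T (g j) i)"
    using insert T_scale[OF bT, of "g x" "c x"] by simp
  finally show ?case .
qed

lemma T_eq_Rop:
  assumes bT: "bounded_op_h2 T"
    and h1: "\<And>j. j \<le> n \<Longrightarrow> T (zpow j) = (\<lambda>i. \<Sum>l\<le>n + k. a l j * zpow l i)"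
    and h2: "\<And>j. j \<ge> n + 1 \<Longrightarrow> T (zpow j) = zpow (j + k)"
    and f: "f \<in> hardy2"
  shows "T f = Rop f"
proof
  fix i
  obtain C where C: "\<forall>f\<in>hardy2. h2_norm (T f) \<le> C * h2_norm f" using T_bnd[OF bT] by blast
  define tr where "tr N = (\<lambda>m. \<Sum>j<N. f j * zpow j m)" for N
  have tr_eq: "tr N m = (if m < N then f m else 0)" for N m
  proof -
    have "(\<Sum>j<N. f j * zpow j m) = (\<Sum>j<N. if j = m then f j else 0)"
      by (rule sum.cong) (auto simp: zpow_def)
    thus ?thesis by (simp add: tr_def)
  qed
  have tr_in: "tr N \<in> hardy2" for N
    unfolding tr_def by (rule hardy2_sum) (auto simp: zpow_hardy2)
  have Tz: "T (zpow j) i = (if j \<le> n then (if i \<le> n + k then a i j else 0) else (if i = j + k then 1 else 0))" for j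
  proof (cases "j \<le> n")
    case True
    have "(\<Sum>l\<le>n + k. a l j * zpow l i) = (\<Sum>l\<le>n + k. if l = i then a l j else 0)"
      by (rule sum.cong) (auto simp: zpow_def)
    thus ?thesis using True h1[OF True] by simp
  next
    case False
    thus ?thesis using h2[of j] by (auto simp: zpow_def)
  qed
  have Ttr: "T (tr N) i = (\<Sum>j<N. f j * T (zpow j) i)" for N
    unfolding tr_def by (subst T_sum[OF bT]) (auto simp: zpow_hardy2)
  have ev: "T (tr N) i = Rop f i" if N: "N > n + i" for N
  proof (cases "i \<le> n + k")
    case True
    have "(\<Sum>j<N. f j * T (zpow j) i) = (\<Sum>j<N. if j \<in> {..n} then a i j * f j else 0)"
      by (rule sum.cong) (use True in \<open>auto simp: Tz\<close>)
    also have "\<dots> = (\<Sum>j\<in>{..<N} \<inter> {..n}. a i j * f j)" by (rule sum.inter_restrict[symmetric]) simp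
    also have "{..<N} \<inter> {..n} = {..n}" using N by auto
    finally show ?thesis using True Ttr by (simp add: Rop_def)
  next
    case False
    have "(\<Sum>j<N. f j * T (zpow j) i) = (\<Sum>j<N. if j = i - k then f j else 0)"
      by (rule sum.cong) (use False in \<open>auto simp: Tz\<close>)
    also have "\<dots> = f (i - k)" using N by simp
    finally show ?thesis using False Ttr by (simp add: Rop_def)
  qed
  define g where "g N = (\<lambda>m. f m + (-1) * tr N m)" for N
  have g_in: "g N \<in> hardy2" for N unfolding g_def by (intro hardy2_add hardy2_scale f tr_in)
  have g_eq: "g N m = (if m < N then 0 else f m)" for N m by (simp add: g_def tr_eq)
  have Tf: "T f = (\<lambda>m. T (tr N) m + T (g N) m)" for N
  proof -
    have "f = (\<lambda>m. tr N m + g N m)" by (auto simp: g_def)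
    hence "T f = T (\<lambda>m. tr N m + g N m)" by simp
    also have "\<dots> = (\<lambda>m. T (tr N) m + T (g N) m)" by (rule T_add[OF bT tr_in g_in])
    finally show ?thesis .
  qed
  have sf: "summable (\<lambda>m. (cmod (f m))\<^sup>2)" using f by (simp add: hardy2_def)
  have gnorm: "h2_norm (g N) = sqrt (\<Sum>m. (cmod (f (m + N)))\<^sup>2)" for N
  proof -
    have sg: "summable (\<lambda>m. (cmod (g N m))\<^sup>2)" using g_in[of N] by (simp add: hardy2_def)
    have "(\<Sum>m. (cmod (g N m))\<^sup>2) = (\<Sum>m. (cmod (g N (m + N)))\<^sup>2) + (\<Sum>m<N. (cmod (g N m))\<^sup>2)"
      by (rule suminf_split_initial_segment[OF sg])
    also have "\<dots> = (\<Sum>m. (cmod (f (m + N)))\<^sup>2)" by (simp add: g_eq)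
    finally show ?thesis by (simp add: h2_norm_def)
  qed
  have "(\<lambda>N. \<Sum>m. (cmod (f (m + N)))\<^sup>2) \<longlonglongrightarrow> 0"
    using suminf_exist_split2[OF sf] by simp
  hence "(\<lambda>N. h2_norm (g N)) \<longlonglongrightarrow> 0"
    unfolding gnorm using tendsto_real_sqrt by fastforce
  hence lim0: "(\<lambda>N. C * h2_norm (g N)) \<longlonglongrightarrow> 0"
    using tendsto_mult[OF tendsto_const[of C]] by fastforce
  have bnd: "norm (T (tr N) i - T f i) \<le> C * h2_norm (g N)" for N
  proof -
    have "norm (T (tr N) i - T f i) = cmod (T (g N) i)" using Tf[of N] by (simp add: norm_minus_commute)
    also have "\<dots> \<le> h2_norm (T (g N))" by (rule coord_le_norm[OF T_in[OF bT g_in]])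
    also have "\<dots> \<le> C * h2_norm (g N)" using C g_in by blast
    finally show ?thesis .
  qed
  have "(\<lambda>N. T (tr N) i - T f i) \<longlonglongrightarrow> 0"
    by (rule Lim_null_comparison[OF _ lim0]) (use bnd in auto)
  hence l1: "(\<lambda>N. T (tr N) i) \<longlonglongrightarrow> T f i" by (simp add: LIM_zero_iff)
  have l2: "(\<lambda>N. T (tr N) i) \<longlonglongrightarrow> Rop f i"
    by (rule tendsto_eventually) (use ev in \<open>auto simp: eventually_at_top_dense intro!: exI[of _ "Suc (n + i)"]\<close>)
  show "T f i = Rop f i" using LIMSEQ_unique[OF l1 l2] .
qed

end



context hsetup
begin

definition Kset :: "(nat \<Rightarrow> complex) set" where
  "Kset = {x. \<forall>m. \<exists>y\<in>hardy2. x = (Rop^^m) y}"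

lemma K_hardy: assumes "x \<in> Kset" shows "x \<in> hardy2"
proof -
  obtain y where "y \<in> hardy2" "x = (Rop^^0) y" using assms unfolding Kset_def by blast
  thus ?thesis by simp
qed

lemma K_comb:
  assumes "finite A" "\<forall>j\<in>A. g j \<in> Kset"
  shows "(\<lambda>i. \<Sum>j\<in>A. c j * g j i) \<in> Kset"
  unfolding Kset_def
proof (intro CollectI allI)
  fix m
  have "\<forall>j\<in>A. \<exists>y. y \<in> hardy2 \<and> g j = (Rop^^m) y" using assms(2) unfolding Kset_def by blast
  then obtain Y where Y: "\<forall>j\<in>A. Y j \<in> hardy2 \<and> g j = (Rop^^m) (Y j)" by metis
  have "(\<lambda>i. \<Sum>j\<in>A. c j * g j i) = (Rop^^m) (\<lambda>i. \<Sum>j\<in>A. c j * Y j i)"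
    unfolding Rpow_lin using Y by (auto intro!: sum.cong)
  moreover have "(\<lambda>i. \<Sum>j\<in>A. c j * Y j i) \<in> hardy2" using Y assms(1) by (intro hardy2_sum) auto
  ultimately show "\<exists>y\<in>hardy2. (\<lambda>i. \<Sum>j\<in>A. c j * g j i) = (Rop^^m) y" by blast
qed

lemma K_R:
  assumes hR: "\<forall>f\<in>hardy2. Rop f \<in> hardy2" and x: "x \<in> Kset"
  shows "Rop x \<in> Kset"
  unfolding Kset_def
proof (intro CollectI allI)
  fix m
  obtain y where y: "y \<in> hardy2" "x = (Rop^^m) y" using x unfolding Kset_def by blast
  have "(Rop^^m) (Rop y) = (Rop^^Suc m) y" by (simp only: funpow_Suc_right o_apply)
  also have "\<dots> = Rop x" using y(2) by simp
  finally have "(Rop^^m) (Rop y) = Rop x" .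
  thus "\<exists>y\<in>hardy2. Rop x = (Rop^^m) y" using hR y(1) by metis
qed

lemma K_Rpow: "\<forall>f\<in>hardy2. Rop f \<in> hardy2 \<Longrightarrow> x \<in> Kset \<Longrightarrow> (Rop^^j) x \<in> Kset"
  by (induction j) (auto intro: K_R)

lemma K_inj:
  assumes x: "x \<in> Kset" and P: "Pr x = (\<lambda>_. 0)"
  shows "x = (\<lambda>_. 0)"
proof
  fix i
  obtain y where y: "y \<in> hardy2" "x = (Rop^^(n + 2 + i)) y" using x unfolding Kset_def by blast
  have "(PA^^(n + 2 + i)) (Pr y) = Pr x" by (simp only: y(2) Pr_Rpow)
  hence "(PA^^(n + 2 + i)) (Pr y) = (\<lambda>_. 0)" using P by simp
  thus "x i = 0" using vanish[of i] y(2) by blast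
qed

lemma K_R_nz:
  assumes x: "x \<in> Kset" and R0: "Rop x = (\<lambda>_. 0)"
  shows "x = (\<lambda>_. 0)"
proof -
  obtain y where y: "y \<in> hardy2" "x = (Rop^^(Suc n)) y" using x unfolding Kset_def by blast
  have Px: "Pr x = (PA^^(Suc n)) (Pr y)" by (simp only: y(2) Pr_Rpow)
  have "PA (Pr x) = Pr (Rop x)" by (simp add: PA_Pr Pr_Rop)
  also have "\<dots> = (\<lambda>_. 0)" using R0 by (simp add: Pr_def)
  finally have "PA (Pr x) = (\<lambda>_. 0)" .
  hence "(PA^^(Suc (Suc n))) (Pr y) = (\<lambda>_. 0)" using Px by (simp del: funpow.simps) simp
  from D1[OF this] have "Pr x = (\<lambda>_. 0)" using Px by simp
  thus ?thesis by (rule K_inj[OF x])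
qed

definition peval :: "complex poly \<Rightarrow> (nat \<Rightarrow> complex) \<Rightarrow> (nat \<Rightarrow> complex)" where
  "peval p y = (\<lambda>i. \<Sum>j\<le>degree p. coeff p j * (Rop^^j) y i)"

lemma peval_ext: "degree p \<le> N \<Longrightarrow> peval p y = (\<lambda>i. \<Sum>j\<le>N. coeff p j * (Rop^^j) y i)"
  unfolding peval_def fun_eq_iff
  by (intro allI sum.mono_neutral_left) (auto simp: coeff_eq_0)

lemma peval_add: "peval (p + q) y = (\<lambda>i. peval p y i + peval q y i)"
proof -
  let ?N = "max (degree p) (degree q)"
  have "degree (p + q) \<le> ?N" by (rule degree_add_le_max)
  thus ?thesis
    using peval_ext[of p ?N y] peval_ext[of q ?N y] peval_ext[of "p + q" ?N y]
    by (simp add: sum.distrib distrib_right)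
qed

lemma peval_smult: "peval (smult c p) y = (\<lambda>i. c * peval p y i)"
  using peval_ext[of "smult c p" "degree p" y] degree_smult_le[of c p]
  by (simp add: peval_def sum_distrib_left mult_ac)

lemma peval_pCons0: "peval (pCons 0 q) y = Rop (peval q y)"
proof -
  have "peval (pCons 0 q) y = (\<lambda>i. \<Sum>j\<le>Suc (degree q). coeff (pCons 0 q) j * (Rop^^j) y i)"
    by (rule peval_ext) (simp add: degree_pCons_le)
  also have "\<dots> = (\<lambda>i. \<Sum>j\<le>degree q. coeff q j * Rop ((Rop^^j) y) i)"
    unfolding sum.atMost_Suc_shift by simp
  also have "\<dots> = Rop (peval q y)" unfolding peval_def Rop_lin ..
  finally show ?thesis .
qed

lemma peval_factor: "peval ([:-z, 1:] * q) y = (\<lambda>i. Rop (peval q y) i - z * peval q y i)"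
proof -
  have e: "[:-z, 1:] * q = smult (-z) q + pCons 0 q" by simp
  show ?thesis by (simp only: e peval_add peval_smult peval_pCons0) (simp add: fun_eq_iff)
qed

lemma peval_K: "\<forall>f\<in>hardy2. Rop f \<in> hardy2 \<Longrightarrow> y \<in> Kset \<Longrightarrow> peval p y \<in> Kset"
  unfolding peval_def by (intro K_comb) (auto intro: K_Rpow)

lemma eigen:
  assumes hR: "\<forall>f\<in>hardy2. Rop f \<in> hardy2"
  shows "p \<noteq> 0 \<Longrightarrow> y \<in> Kset \<Longrightarrow> y \<noteq> (\<lambda>_. 0) \<Longrightarrow> peval p y = (\<lambda>_. 0) \<Longrightarrow>
    \<exists>w\<in>Kset. w \<noteq> (\<lambda>_. 0) \<and> (\<exists>l. Rop w = (\<lambda>i. l * w i))"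
proof (induction "degree p" arbitrary: p rule: less_induct)
  case less
  show ?case
  proof (cases "degree p = 0")
    case True
    have c0: "coeff p 0 \<noteq> 0" using less.prems(1) True leading_coeff_0_iff[of p] by simp
    have "peval p y = (\<lambda>i. coeff p 0 * y i)" using True by (simp add: peval_def)
    then have "y = (\<lambda>_. 0)" using less.prems(4) c0 by (simp add: fun_eq_iff)
    thus ?thesis using less.prems(3) by simp
  next
    case False
    then obtain z where "poly p z = 0"
      using fundamental_theorem_of_algebra[of p] constant_degree[of p] False by blast
    then obtain q where pq: "p = [:-z, 1:] * q" using poly_eq_0_iff_dvd by (metis dvdE)
    have q0: "q \<noteq> 0" using less.prems(1) pq by auto
    have "degree p = degree [:-z, 1:] + degree q" unfolding pq using q0 by (intro degree_mult_eq) simp_all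
    hence dq: "degree q < degree p" by simp
    show ?thesis
    proof (cases "peval q y = (\<lambda>_. 0)")
      case True
      show ?thesis by (rule less.hyps[OF dq q0 less.prems(2,3) True])
    next
      case False
      have "Rop (peval q y) = (\<lambda>i. z * peval q y i)"
        using less.prems(4) unfolding pq peval_factor by (simp add: fun_eq_iff)
      thus ?thesis using False peval_K[OF hR less.prems(2)] by blast
    qed
  qed
qed

end



theorem theorem4p3:
  fixes n k :: nat and T :: "(nat \<Rightarrow> complex) \<Rightarrow> (nat \<Rightarrow> complex)"
    and a :: "nat \<Rightarrow> nat \<Rightarrow> complex"
  assumes "k \<ge> 1"
    and "bounded_op_h2 T"
    and "\<And>j. j \<le> n \<Longrightarrow> T (zpow j) = (\<lambda>i. \<Sum>l\<le>n + k. a l j * zpow l i)"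
    and "\<And>j. j \<ge> n + 1 \<Longrightarrow> T (zpow j) = zpow (j + k)"
    and "contraction_matrix n a"
  shows "analytic_op_h2 T \<longleftrightarrow> (\<forall>lam. lam \<noteq> 0 \<longrightarrow> \<not> eigenvalue_h2 T lam)"
proof -
  interpret hsetup n k a using assms(1) by unfold_locales
  have TR: "\<And>f. f \<in> hardy2 \<Longrightarrow> T f = Rop f"
    using T_eq_Rop[OF assms(2,3,4)] by blast
  have hR: "\<forall>f\<in>hardy2. Rop f \<in> hardy2"
    using TR T_in[OF assms(2)] by metis
  have Rpow_in: "(Rop^^m) f \<in> hardy2" if "f \<in> hardy2" for f m
    using that hR by (induction m) auto
  have Tpow: "(T^^m) f = (Rop^^m) f" if "f \<in> hardy2" for f m
    using that by (induction m) (auto simp: TR Rpow_in)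
  have R0: "(Rop^^m) (\<lambda>_. 0) = (\<lambda>_. 0)" for m
    by (induction m) (auto simp: Rop_def)
  show ?thesis
  proof
    assume an: "analytic_op_h2 T"
    show "\<forall>lam. lam \<noteq> 0 \<longrightarrow> \<not> eigenvalue_h2 T lam"
    proof (intro allI impI notI)
      fix lam :: complex assume l0: "lam \<noteq> 0" and ev: "eigenvalue_h2 T lam"
      then obtain f where f: "f \<in> hardy2" "f \<noteq> (\<lambda>_. 0)" "T f = (\<lambda>m. lam * f m)"
        unfolding eigenvalue_h2_def by blast
      have pre: "(T^^m) (\<lambda>i. (inverse lam)^m * f i) = f" for m
      proof (induction m)
        case 0 thus ?case by simp
      next
        case (Suc m)
        have "T (\<lambda>i. (inverse lam)^Suc m * f i) = (\<lambda>i. (inverse lam)^Suc m * T f i)"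
          by (rule T_scale[OF assms(2) f(1)])
        also have "\<dots> = (\<lambda>i. (inverse lam)^m * f i)" using f(3) l0 by (simp add: fun_eq_iff)
        finally have "(T^^Suc m) (\<lambda>i. (inverse lam)^Suc m * f i) = (T^^m) (\<lambda>i. (inverse lam)^m * f i)"
          by (simp only: funpow_Suc_right o_apply)
        thus ?case using Suc by simp
      qed
      have mem: "f \<in> (\<Inter>m\<in>{1..}. (T ^^ m) ` hardy2)"
      proof (rule INT_I)
        fix m :: nat
        show "f \<in> (T^^m) ` hardy2"
          by (rule rev_image_eqI[OF hardy2_scale[OF f(1), of "(inverse lam)^m"]]) (simp add: pre)
      qed
      have eq: "(\<Inter>m\<in>{1..}. (T ^^ m) ` hardy2) = {(\<lambda>_. 0)}"
        using an unfolding analytic_op_h2_def .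
      have "f \<in> {(\<lambda>_. 0)}" using mem unfolding eq .
      thus False using f(2) by simp
    qed
  next
    assume noev: "\<forall>lam. lam \<noteq> 0 \<longrightarrow> \<not> eigenvalue_h2 T lam"
    show "analytic_op_h2 T"
      unfolding analytic_op_h2_def
    proof (intro equalityI subsetI)
      fix x :: "nat \<Rightarrow> complex" assume "x \<in> {(\<lambda>_. 0)}"
      hence x0: "x = (\<lambda>_. 0)" by simp
      show "x \<in> (\<Inter>m\<in>{1..}. (T ^^ m) ` hardy2)"
      proof (rule INT_I)
        fix m :: nat
        show "x \<in> (T^^m) ` hardy2"
          by (rule rev_image_eqI[OF hardy2_zero]) (simp add: x0 Tpow[OF hardy2_zero] R0)
      qed
    next
      fix x assume x: "x \<in> (\<Inter>m\<in>{1..}. (T ^^ m) ` hardy2)"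
      have xK: "x \<in> Kset"
        unfolding Kset_def
      proof (intro CollectI allI)
        fix m
        show "\<exists>y\<in>hardy2. x = (Rop^^m) y"
        proof (cases m)
          case 0
          have "(1::nat) \<in> {1..}" by simp
          from INT_D[OF x this] have "x \<in> (T^^1) ` hardy2" .
          then obtain y where "y \<in> hardy2" "x = (T^^1) y" by (rule imageE) simp
          hence "x \<in> hardy2" using T_in[OF assms(2)] by simp
          thus ?thesis using 0 by auto
        next
          case (Suc m')
          hence "m \<in> {1..}" by simp
          from INT_D[OF x this] have "x \<in> (T^^m) ` hardy2" .
          then obtain y where y: "y \<in> hardy2" "x = (T^^m) y" by (rule imageE) simp
          show ?thesis using Tpow[OF y(1), of m] y by auto
        qed
      qed
      show "x \<in> {(\<lambda>_. 0)}"
      proof (rule ccontr)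
        assume "x \<notin> {(\<lambda>_. 0)}"
        hence xnz: "x \<noteq> (\<lambda>_. 0)" by simp
        have supp: "\<And>j i. n < i \<Longrightarrow> Pr ((Rop^^j) x) i = 0" by (simp add: Pr_def)
        obtain \<alpha> where \<alpha>: "\<exists>j\<le>Suc n. \<alpha> j \<noteq> 0" "\<forall>i. (\<Sum>j\<le>Suc n. \<alpha> j * Pr ((Rop^^j) x) i) = 0"
          using dep[of n "\<lambda>j. Pr ((Rop^^j) x)", OF supp] by blast
        define s where "s = (\<lambda>i. \<Sum>j\<le>Suc n. \<alpha> j * (Rop^^j) x i)"
        have sK: "s \<in> Kset" unfolding s_def by (intro K_comb) (auto intro: K_Rpow[OF hR xK])
        have "Pr s = (\<lambda>_. 0)"
        proof
          fix i show "Pr s i = 0"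
            using \<alpha>(2)[rule_format, of i] by (auto simp: Pr_def s_def)
        qed
        hence s0: "s = (\<lambda>_. 0)" by (rule K_inj[OF sK])
        define p where "p = (\<Sum>j\<le>Suc n. monom (\<alpha> j) j)"
        have cp: "coeff p j = (if j \<le> Suc n then \<alpha> j else 0)" for j
          unfolding p_def by (simp add: coeff_sum coeff_monom)
        have p0: "p \<noteq> 0" using \<alpha>(1) cp by (metis coeff_0)
        have dp: "degree p \<le> Suc n" by (rule degree_le) (simp add: cp)
        have "peval p x = (\<lambda>i. \<Sum>j\<le>Suc n. coeff p j * (Rop^^j) x i)" by (rule peval_ext[OF dp])
        also have "\<dots> = s" unfolding s_def by (simp add: cp)
        finally have "peval p x = (\<lambda>_. 0)" using s0 by simp
        from eigen[OF hR p0 xK xnz this] obtain w l where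
          w: "w \<in> Kset" "w \<noteq> (\<lambda>_. 0)" "Rop w = (\<lambda>i. l * w i)" by blast
        have "l \<noteq> 0"
        proof
          assume "l = 0"
          hence "Rop w = (\<lambda>_. 0)" using w(3) by simp
          with K_R_nz[OF w(1)] w(2) show False by simp
        qed
        moreover have "eigenvalue_h2 T l"
          unfolding eigenvalue_h2_def
          by (rule bexI[of _ w]) (use w K_hardy[OF w(1)] TR[OF K_hardy[OF w(1)]] in auto)
        ultimately show False using noev by blast
      qed
    qed
  qed
qed

end
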